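(* Let $\Theta\subset\mathbb{R}^p$, let $\mathcal{K}\subset\Theta$ be compact, let $P$ be a probability measure on a measurable space $\Omega_T$, and for each $\theta\in\Theta$ let $(h^\theta_n)_{n\ge1}$ be measurable functions $\Omega_T\to\mathbb{R}$. Assume: (i) for every $\theta\in\Theta$, $h^\theta_n$ converges $P$-a.s. to a finite real number $h^\theta$; (ii) $\theta\mapsto h^\theta$ has a unique minimizer $\theta^*$ over $\Theta$, and $\theta^*\in\mathcal{K}$; (iii) for $P$-a.e. $\omega$ and all $n$ large enough, $\theta\mapsto h^\theta_n(\omega)$ attains its infimum over $\mathcal{K}$ at at least one point $\hat\theta_n(\omega)$; (iv) $\theta\mapsto h^\theta$ is lower semicontinuous on $\Theta$; (v) there is $g_0:\mathbb{R}_+\to\mathbb{R}_+$ with $\lim_{x\to0}g_0(x)=0$ such that for every $\varepsilon>0$ and $\theta\in\mathcal{K}$ there are a finite set $\mathcal{N}(\theta)\subset B(\theta,g_0(\varepsilon))\cap\Theta$ and $r(\theta)>0$ with $P\Big(\limsup_{n\to\infty}\big(\min_{\theta'\in\mathcal{N}(\theta)}h^{\theta'}_n-\inf_{\theta'\in B(\theta,r(\theta))\cap\mathcal{K}}h^{\theta'}_n\big)\ge\varepsilon\Big)=0.$ Then $\hat\theta_n=\mathrm{argmin}_{\theta\in\mathcal{K}}h^\theta_n$ converges $P$-almost surely to $\theta^*$ as $n\to\infty$.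
   Context: $B(\theta,r)$ denotes the open Euclidean ball of center $\theta$ and radius $r$ in $\mathbb{R}^p$. *)

theory Defs
  imports "HOL-Probability.Probability"
begin

definition lsc_on :: "'a::metric_space set \<Rightarrow> ('a \<Rightarrow> real) \<Rightarrow> bool" where
  "lsc_on S f \<longleftrightarrow> (\<forall>x\<in>S. \<forall>e>0. \<forall>\<^sub>F y in at x within S. f x - e < f y)"

end

theory Submission imports Defs begin

lemma sepA:
  fixes \<Theta> K :: "'a::metric_space set" and H :: "'a \<Rightarrow> real"
  assumes Kc: "compact K" and KT: "K \<subseteq> \<Theta>"
    and uniq: "\<And>\<theta>. \<theta> \<in> \<Theta> \<Longrightarrow> \<theta> \<noteq> s \<Longrightarrow> H s < H \<theta>"
    and lsc: "lsc_on \<Theta> H" and dp: "\<delta> > 0"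
  shows "\<exists>\<eta>>0. \<exists>c>0. \<forall>\<theta>\<in>K - ball s \<delta>. \<forall>\<theta>'\<in>\<Theta>. dist \<theta>' \<theta> < \<eta> \<longrightarrow> H s + c < H \<theta>'"
proof -
  define Kd where "Kd = K - ball s \<delta>"
  have Kdc: "compact Kd" unfolding Kd_def using Kc by (simp add: compact_diff)
  define e where "e x = (H x - H s) / 2" for x
  have "\<forall>x\<in>Kd. \<exists>d>0. \<forall>y\<in>\<Theta>. dist y x < d \<longrightarrow> H s + e x < H y"
  proof
    fix x assume x: "x \<in> Kd"
    hence xT: "x \<in> \<Theta>" and xs: "x \<noteq> s" using KT dp unfolding Kd_def by auto
    have ep: "e x > 0" using uniq[OF xT xs] by (simp add: e_def)
    from lsc xT ep have "\<forall>\<^sub>F y in at x within \<Theta>. H x - e x < H y" unfolding lsc_on_def by blast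
    then obtain d where d: "d > 0" "\<And>y. y \<in> \<Theta> \<Longrightarrow> y \<noteq> x \<Longrightarrow> dist y x < d \<Longrightarrow> H x - e x < H y"
      unfolding eventually_at by blast
    show "\<exists>d>0. \<forall>y\<in>\<Theta>. dist y x < d \<longrightarrow> H s + e x < H y"
    proof (intro exI[of _ d] conjI ballI impI)
      fix y assume "y \<in> \<Theta>" "dist y x < d"
      with d ep show "H s + e x < H y" by (cases "y = x") (auto simp: e_def field_simps)
    qed fact
  qed
  then obtain d where d: "\<And>x. x \<in> Kd \<Longrightarrow> d x > 0"
     "\<And>x y. x \<in> Kd \<Longrightarrow> y \<in> \<Theta> \<Longrightarrow> dist y x < d x \<Longrightarrow> H s + e x < H y"
    by metis
  have epos: "\<And>x. x \<in> Kd \<Longrightarrow> e x > 0"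
    using uniq KT dp unfolding Kd_def e_def by fastforce
  have "Kd \<subseteq> (\<Union>x\<in>Kd. ball x (d x / 2))" using d(1) by force
  then obtain T where T: "T \<subseteq> Kd" "finite T" "Kd \<subseteq> (\<Union>x\<in>T. ball x (d x / 2))"
    using compactE_image[OF Kdc, of Kd "\<lambda>x. ball x (d x / 2)"] by blast
  define \<eta> where "\<eta> = Min (insert 1 ((\<lambda>x. d x / 2) ` T))"
  define c where "c = Min (insert 1 (e ` T))"
  have \<eta>p: "\<eta> > 0" unfolding \<eta>_def using T d(1) by (subst Min_gr_iff) auto
  have cp: "c > 0" unfolding c_def using T epos by (subst Min_gr_iff) auto
  show ?thesis
  proof (rule exI[of _ \<eta>], rule conjI[OF \<eta>p], rule exI[of _ c], rule conjI[OF cp], intro ballI impI)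
    fix \<theta> \<theta>' assume th: "\<theta> \<in> K - ball s \<delta>" and th': "\<theta>' \<in> \<Theta>" and dt: "dist \<theta>' \<theta> < \<eta>"
    then obtain x where x: "x \<in> T" "dist x \<theta> < d x / 2" using T(3) unfolding Kd_def by auto
    have "\<eta> \<le> d x / 2" unfolding \<eta>_def using x T by (intro Min_le) auto
    hence "dist \<theta>' x < d x" using dt x dist_triangle[of \<theta>' x \<theta>] by (simp add: dist_commute)
    hence "H s + e x < H \<theta>'" using d(2)[of x \<theta>'] x T th' by auto
    moreover have "c \<le> e x" unfolding c_def using x T by (intro Min_le) auto
    ultimately show "H s + c < H \<theta>'" by simp
  qed
qed
theorem lemma4:
  fixes \<Theta> K :: "'a::euclidean_space set"
    and P :: "'w measure"
    and h :: "'a \<Rightarrow> nat \<Rightarrow> 'w \<Rightarrow> real"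
    and H :: "'a \<Rightarrow> real"
    and \<theta>star :: 'a
    and g0 :: "real \<Rightarrow> real"
    and \<theta>hat :: "nat \<Rightarrow> 'w \<Rightarrow> 'a"
  assumes prob: "prob_space P"
    and K_compact: "compact K" and K_sub: "K \<subseteq> \<Theta>"
    and h_meas: "\<And>\<theta> n. \<theta> \<in> \<Theta> \<Longrightarrow> h \<theta> n \<in> borel_measurable P"
    and conv: "\<And>\<theta>. \<theta> \<in> \<Theta> \<Longrightarrow> AE \<omega> in P. (\<lambda>n. h \<theta> n \<omega>) \<longlonglongrightarrow> H \<theta>"
    and star_in: "\<theta>star \<in> \<Theta>" "\<theta>star \<in> K"
    and star_unique: "\<And>\<theta>. \<theta> \<in> \<Theta> \<Longrightarrow> \<theta> \<noteq> \<theta>star \<Longrightarrow> H \<theta>star < H \<theta>"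
    and argmin_exists: "AE \<omega> in P. \<forall>\<^sub>F n in sequentially.
                          \<exists>\<theta>\<in>K. \<forall>\<theta>'\<in>K. h \<theta> n \<omega> \<le> h \<theta>' n \<omega>"
    and lsc: "lsc_on \<Theta> H"
    and g0_nonneg: "\<And>x. x \<ge> 0 \<Longrightarrow> g0 x \<ge> 0"
    and g0_lim: "(g0 \<longlongrightarrow> 0) (at_right 0)"
    and cover: "\<And>\<epsilon> \<theta>. \<epsilon> > 0 \<Longrightarrow> \<theta> \<in> K \<Longrightarrow>
       \<exists>N r. finite N \<and> N \<noteq> {} \<and> N \<subseteq> ball \<theta> (g0 \<epsilon>) \<inter> \<Theta> \<and> r > 0 \<and>
         (AE \<omega> in P. limsup (\<lambda>n. ereal (Min ((\<lambda>\<theta>'. h \<theta>' n \<omega>) ` N))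
                       - (INF \<theta>'\<in>ball \<theta> r \<inter> K. ereal (h \<theta>' n \<omega>))) < ereal \<epsilon>)"
    and \<theta>hat_argmin: "AE \<omega> in P. \<forall>\<^sub>F n in sequentially.
                        \<theta>hat n \<omega> \<in> K \<and> (\<forall>\<theta>'\<in>K. h (\<theta>hat n \<omega>) n \<omega> \<le> h \<theta>' n \<omega>)"
  shows "AE \<omega> in P. (\<lambda>n. \<theta>hat n \<omega>) \<longlonglongrightarrow> \<theta>star"
proof -
  have B: "AE \<omega> in P. \<forall>\<^sub>F n in sequentially. dist (\<theta>hat n \<omega>) \<theta>star < \<delta>" if dp: "\<delta> > 0" for \<delta>
  proof -
    obtain \<eta> c where \<eta>p: "\<eta> > 0" and cp: "c > 0" and
      sep: "\<forall>\<theta>\<in>K - ball \<theta>star \<delta>. \<forall>\<theta>'\<in>\<Theta>. dist \<theta>' \<theta> < \<eta> \<longrightarrow> H \<theta>star + c < H \<theta>'"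
      using sepA[OF K_compact K_sub star_unique lsc dp] by blast
    have "\<forall>\<^sub>F x in at_right 0. g0 x < \<eta>" using g0_lim \<eta>p by (rule order_tendstoD(2))
    moreover have "\<forall>\<^sub>F x in at_right (0::real). x < c/2"
      using tendsto_ident_at[of "0::real" "{0<..}"] by (rule order_tendstoD(2)) (use cp in simp)
    moreover have "\<forall>\<^sub>F x in at_right (0::real). 0 < x" by (rule eventually_at_right_less)
    ultimately have "\<forall>\<^sub>F x in at_right (0::real). g0 x < \<eta> \<and> x < c/2 \<and> 0 < x"
      by eventually_elim auto
    then obtain \<epsilon> where \<epsilon>: "g0 \<epsilon> < \<eta>" "\<epsilon> < c/2" "0 < \<epsilon>"
      using eventually_happens trivial_limit_at_right_real by blast
    define Kd where "Kd = K - ball \<theta>star \<delta>"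
    have Kdc: "compact Kd" unfolding Kd_def using K_compact by (simp add: compact_diff)
    have "\<forall>\<theta>\<in>Kd. \<exists>N r. finite N \<and> N \<noteq> {} \<and> N \<subseteq> ball \<theta> (g0 \<epsilon>) \<inter> \<Theta> \<and> r > 0 \<and>
         (AE \<omega> in P. limsup (\<lambda>n. ereal (Min ((\<lambda>\<theta>'. h \<theta>' n \<omega>) ` N))
                       - (INF \<theta>'\<in>ball \<theta> r \<inter> K. ereal (h \<theta>' n \<omega>))) < ereal \<epsilon>)"
      using cover \<epsilon>(3) unfolding Kd_def by blast
    from this[THEN bchoice] obtain N where N: "\<forall>\<theta>\<in>Kd. \<exists>r. finite ((N \<theta>)) \<and> (N \<theta>) \<noteq> {} \<and> (N \<theta>) \<subseteq> ball \<theta> (g0 \<epsilon>) \<inter> \<Theta> \<and> r > 0 \<and>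
         (AE \<omega> in P. limsup (\<lambda>n. ereal (Min ((\<lambda>\<theta>'. h \<theta>' n \<omega>) ` (N \<theta>)))
                       - (INF \<theta>'\<in>ball \<theta> r \<inter> K. ereal (h \<theta>' n \<omega>))) < ereal \<epsilon>)" ..
    from N[THEN bchoice] obtain r where Nr0: "\<forall>\<theta>\<in>Kd. finite ((N \<theta>)) \<and> (N \<theta>) \<noteq> {} \<and> (N \<theta>) \<subseteq> ball \<theta> (g0 \<epsilon>) \<inter> \<Theta> \<and> (r \<theta>) > 0 \<and>
         (AE \<omega> in P. limsup (\<lambda>n. ereal (Min ((\<lambda>\<theta>'. h \<theta>' n \<omega>) ` (N \<theta>)))
                       - (INF \<theta>'\<in>ball \<theta> (r \<theta>) \<inter> K. ereal (h \<theta>' n \<omega>))) < ereal \<epsilon>)" ..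
    note Nr = Nr0[rule_format]
    have "Kd \<subseteq> (\<Union>x\<in>Kd. ball x (r x))" using Nr by force
    then obtain T where T: "T \<subseteq> Kd" "finite T" "Kd \<subseteq> (\<Union>x\<in>T. ball x (r x))"
      using compactE_image[OF Kdc, of Kd "\<lambda>x. ball x (r x)"] by blast
    define U where "U = \<Union>(N ` T)"
    have Uf: "finite U" unfolding U_def using T Nr by auto
    have UT: "U \<subseteq> \<Theta>" unfolding U_def using T Nr by blast
    have AE1: "AE \<omega> in P. \<forall>\<theta>'\<in>U. (\<lambda>n. h \<theta>' n \<omega>) \<longlonglongrightarrow> H \<theta>'"
      using Uf by (rule AE_finite_allI) (use conv UT in blast)
    have AE2: "AE \<omega> in P. \<forall>\<theta>\<in>T. limsup (\<lambda>n. ereal (Min ((\<lambda>\<theta>'. h \<theta>' n \<omega>) ` N \<theta>))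
                       - (INF \<theta>'\<in>ball \<theta> (r \<theta>) \<inter> K. ereal (h \<theta>' n \<omega>))) < ereal \<epsilon>"
      using T(2) by (rule AE_finite_allI) (use T Nr in blast)
    have AE3: "AE \<omega> in P. (\<lambda>n. h \<theta>star n \<omega>) \<longlonglongrightarrow> H \<theta>star" using conv star_in(1) by blast
    show ?thesis using AE1 AE2 AE3 \<theta>hat_argmin
    proof eventually_elim
      case (elim \<omega>)
      have E1: "\<forall>\<^sub>F n in sequentially. H \<theta>star + 3*c/4 < Min ((\<lambda>\<theta>'. h \<theta>' n \<omega>) ` N \<theta>)"
        if th: "\<theta> \<in> T" for \<theta>
      proof -
        have thK: "\<theta> \<in> Kd" using th T by auto
        have fin: "finite (N \<theta>)" and ne: "N \<theta> \<noteq> {}" using Nr[OF thK] by auto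
        have "\<forall>\<^sub>F n in sequentially. H \<theta>star + 3*c/4 < h \<theta>' n \<omega>" if t': "\<theta>' \<in> N \<theta>" for \<theta>'
        proof -
          have "\<theta>' \<in> \<Theta>" "dist \<theta> \<theta>' < g0 \<epsilon>" using Nr[OF thK] t' by auto
          hence t1: "\<theta>' \<in> \<Theta>" and t2: "dist \<theta>' \<theta> < \<eta>" using \<epsilon>(1) by (auto simp: dist_commute)
          have "H \<theta>star + c < H \<theta>'" using sep thK t1 t2 unfolding Kd_def by blast
          moreover have "(\<lambda>n. h \<theta>' n \<omega>) \<longlonglongrightarrow> H \<theta>'" using elim(1) t' th unfolding U_def by blast
          ultimately show ?thesis using cp by (intro order_tendstoD(1)) auto
        qed
        hence "\<forall>\<^sub>F n in sequentially. \<forall>\<theta>'\<in>N \<theta>. H \<theta>star + 3*c/4 < h \<theta>' n \<omega>"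
          using fin by (intro eventually_ball_finite) auto
        thus ?thesis by eventually_elim (use fin ne in auto)
      qed
      have E2: "\<forall>\<^sub>F n in sequentially. ereal (Min ((\<lambda>\<theta>'. h \<theta>' n \<omega>) ` N \<theta>))
                       - (INF \<theta>'\<in>ball \<theta> (r \<theta>) \<inter> K. ereal (h \<theta>' n \<omega>)) < ereal \<epsilon>"
        if th: "\<theta> \<in> T" for \<theta>
        using elim(2) th by (intro Limsup_lessD) blast
      have E12: "\<forall>\<^sub>F n in sequentially. \<forall>\<theta>\<in>T. H \<theta>star + 3*c/4 < Min ((\<lambda>\<theta>'. h \<theta>' n \<omega>) ` N \<theta>) \<and>
           ereal (Min ((\<lambda>\<theta>'. h \<theta>' n \<omega>) ` N \<theta>))
                       - (INF \<theta>'\<in>ball \<theta> (r \<theta>) \<inter> K. ereal (h \<theta>' n \<omega>)) < ereal \<epsilon>"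
        using T(2) E1 E2 by (intro eventually_ball_finite) (auto intro: eventually_conj)
      have E3: "\<forall>\<^sub>F n in sequentially. h \<theta>star n \<omega> < H \<theta>star + c/4"
        using elim(3) cp by (intro order_tendstoD(2)) auto
      show ?case using E12 E3 elim(4)
      proof eventually_elim
        case (elim n)
        show ?case
        proof (rule ccontr)
          assume "\<not> dist (\<theta>hat n \<omega>) \<theta>star < \<delta>"
          hence "\<theta>hat n \<omega> \<in> Kd" using elim(3) unfolding Kd_def by (auto simp: dist_commute)
          then obtain \<theta> where th: "\<theta> \<in> T" "\<theta>hat n \<omega> \<in> ball \<theta> (r \<theta>)" using T(3) by blast
          define I where "I = (INF \<theta>'\<in>ball \<theta> (r \<theta>) \<inter> K. ereal (h \<theta>' n \<omega>))"
          define m where "m = Min ((\<lambda>\<theta>'. h \<theta>' n \<omega>) ` N \<theta>)"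
          have I1: "I \<le> ereal (h (\<theta>hat n \<omega>) n \<omega>)" unfolding I_def
            by (rule INF_lower) (use th elim(3) in auto)
          have h1: "h (\<theta>hat n \<omega>) n \<omega> \<le> h \<theta>star n \<omega>" using elim(3) star_in(2) by blast
          have m1: "H \<theta>star + 3*c/4 < m" and m2: "ereal m - I < ereal \<epsilon>"
            using elim(1) th(1) unfolding m_def I_def by auto
          show False
          proof (cases I)
            case (real x)
            then show ?thesis using I1 h1 m1 m2 elim(2) \<epsilon> by auto
          next
            case PInf then show ?thesis using I1 by auto
          next
            case MInf then show ?thesis using m2 by auto
          qed
        qed
      qed
    qed
  qed
  have "AE \<omega> in P. \<forall>m::nat. \<forall>\<^sub>F n in sequentially. dist (\<theta>hat n \<omega>) \<theta>star < inverse (real (Suc m))"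
    unfolding AE_all_countable by (intro allI B) auto
  thus ?thesis
  proof eventually_elim
    case (elim \<omega>)
    show ?case unfolding tendsto_iff
    proof (intro allI impI)
      fix e :: real assume "e > 0"
      then obtain m where m: "inverse (real (Suc m)) < e" using reals_Archimedean by blast
      show "\<forall>\<^sub>F n in sequentially. dist (\<theta>hat n \<omega>) \<theta>star < e"
        using elim[rule_format, of m] by eventually_elim (use m in auto)
    qed
  qed
qed

end
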